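(* For any atomic proposition $p$, the rules $\mathsf{acl}_p$: from $\Gamma,p,p\Rightarrow\Delta$ infer $\Gamma,p\Rightarrow\Delta$, and $\mathsf{acr}_p$: from $\Gamma\Rightarrow p,p,\Delta$ infer $\Gamma\Rightarrow p,\Delta$ (with $\Gamma,\Delta$ arbitrary finite multisets of formulas) are strongly admissible in $\mathsf{Grz}_\infty+\mathsf{cut}$.
   Context: Formulas are built from $\bot$ and atoms by $\to$ and $\Box$; sequents $\Gamma\Rightarrow\Delta$ have finite multisets of formulas on each side; $\Box\Pi$ denotes $\{\Box B:B\in\Pi\}$. The calculus $\mathsf{Grz}_\infty+\mathsf{cut}$ has initial sequents $\Gamma,p\Rightarrow p,\Delta$ ($p$ atomic), $\Gamma,\bot\Rightarrow\Delta$, and rules $(\to_L)$ from $\Gamma,B\Rightarrow\Delta$ and $\Gamma\Rightarrow A,\Delta$ infer $\Gamma,A\to B\Rightarrow\Delta$; $(\to_R)$ from $\Gamma,A\Rightarrow B,\Delta$ infer $\Gamma\Rightarrow A\to B,\Delta$; $(\mathsf{refl})$ from $\Gamma,B,\Box B\Rightarrow\Delta$ infer $\Gamma,\Box B\Rightarrow\Delta$; $(\Box)$ from left premise $\Gamma,\Box\Pi\Rightarrow A,\Delta$ and right premise $\Box\Pi\Rightarrow A$ infer $\Gamma,\Box\Pi\Rightarrow\Box A,\Delta$; $(\mathsf{cut})$ from $\Gamma\Rightarrow A,\Delta$ and $\Gamma,A\Rightarrow\Delta$ infer $\Gamma\Rightarrow\Delta$. An $\infty$-proof is a possibly infinite tree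 of sequents built by these rules with leaves labelled by initial sequents, in which every infinite branch passes through a right premise of $(\Box)$ infinitely often; $\mathcal P$ is the set of all $\infty$-proofs. The $n$-fragment of an $\infty$-proof is the finite tree obtained by cutting every branch at the $n$-th (from the root) right premise of $(\Box)$; the main fragment is the $1$-fragment; the local height $|\pi|$ is the length of the longest branch of the main fragment (an $\infty$-proof consisting only of an initial sequent has height $0$). Write $\pi\sim_n\tau$ if the $n$-fragments of $\pi,\tau$ coincide, and $\pi\sim_0\tau$ always. $\mathcal P_n$ is the set of $\infty$-proofs with no application of $(\mathsf{cut})$ in their $n$-fragment, and $\mathcal P_0=\mathcal P$. A single-premise rule is strongly admissible in $\mathsf{Grz}_\infty+\mathsf{cut}$ if there is a mapping $\mathsf u:\mathcal P\to\mathcal P$ such that: (i) $\mathsf u$ is non-expansive: $\pi\sim_n\pi'$ implies $\mathsf u(\pi)\sim_n\mathsf u(\pi')$ for all $n$; (ii) $\mathsf u$ is adequate: $\pi\in\mathcal P_n$ implies $\mathsf u(\pi)\in\mathcal P_n$ for all $n$; (iii) $|\mathsf u(\pi)|\le|\pi|$ for all $\pi\in\mathcal P$; (iv) for every instance of the rule, $\mathsf u$ maps every $\infty$-proof of its premise to an $\infty$-proof of its conclusion. *)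

theory Defs
  imports Main "HOL-Library.Multiset" "HOL-Library.Extended_Nat"
begin

datatype 'a fm = Bot | At 'a | Imp "'a fm" "'a fm" | Box "'a fm"

type_synonym 'a sequent = "'a fm multiset \<times> 'a fm multiset"

datatype rlab = Ax | ImpL | ImpR | Refl | BoxR | Cut

text \<open>Local correctness of one rule application: premises (in order) and conclusion.
  For BoxR the premise with index 0 is the left premise, index 1 the right premise.\<close>
fun inference :: "rlab \<Rightarrow> 'a sequent list \<Rightarrow> 'a sequent \<Rightarrow> bool" where
  "inference Ax ps s \<longleftrightarrow> ps = [] \<and>
     ((\<exists>p. At p \<in># fst s \<and> At p \<in># snd s) \<or> Bot \<in># fst s)"
| "inference ImpL ps s \<longleftrightarrow> (\<exists>\<Gamma> \<Delta> A B.
     ps = [(\<Gamma> + {#B#}, \<Delta>), (\<Gamma>, {#A#} + \<Delta>)] \<and> s = (\<Gamma> + {#Imp A B#}, \<Delta>))"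
| "inference ImpR ps s \<longleftrightarrow> (\<exists>\<Gamma> \<Delta> A B.
     ps = [(\<Gamma> + {#A#}, {#B#} + \<Delta>)] \<and> s = (\<Gamma>, {#Imp A B#} + \<Delta>))"
| "inference Refl ps s \<longleftrightarrow> (\<exists>\<Gamma> \<Delta> B.
     ps = [(\<Gamma> + {#B, Box B#}, \<Delta>)] \<and> s = (\<Gamma> + {#Box B#}, \<Delta>))"
| "inference BoxR ps s \<longleftrightarrow> (\<exists>\<Gamma> \<Delta> \<Pi> A.
     ps = [(\<Gamma> + image_mset Box \<Pi>, {#A#} + \<Delta>), (image_mset Box \<Pi>, {#A#})] \<and>
     s = (\<Gamma> + image_mset Box \<Pi>, {#Box A#} + \<Delta>))"
| "inference Cut ps s \<longleftrightarrow> (\<exists>\<Gamma> \<Delta> A.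
     ps = [(\<Gamma>, {#A#} + \<Delta>), (\<Gamma> + {#A#}, \<Delta>)] \<and> s = (\<Gamma>, \<Delta>))"

codatatype 'a ptree = Node (lab: "'a sequent \<times> rlab") (subs: "'a ptree list")

definition seq :: "'a ptree \<Rightarrow> 'a sequent" where "seq t = fst (lab t)"
definition rl :: "'a ptree \<Rightarrow> rlab" where "rl t = snd (lab t)"

fun valid :: "'a ptree \<Rightarrow> nat list \<Rightarrow> bool" where
  "valid t [] = True"
| "valid t (i # is) = (i < length (subs t) \<and> valid (subs t ! i) is)"

fun sub :: "'a ptree \<Rightarrow> nat list \<Rightarrow> 'a ptree" where
  "sub t [] = t"
| "sub t (i # is) = sub (subs t ! i) is"

fun rbc :: "'a ptree \<Rightarrow> nat list \<Rightarrow> nat" where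
  "rbc t [] = 0"
| "rbc t (i # is) = (if rl t = BoxR \<and> i = 1 then 1 else 0) + rbc (subs t ! i) is"

definition step_ok :: "'a ptree \<Rightarrow> bool" where
  "step_ok t \<longleftrightarrow> inference (rl t) (map seq (subs t)) (seq t)"

text \<open>An infinite branch is an infinite sequence of child indices all of whose prefixes
  are addresses; it passes through a right premise of (Box) at step n iff the node at the
  prefix of length n is a (Box) application and b n = 1.\<close>
definition inf_branch :: "'a ptree \<Rightarrow> (nat \<Rightarrow> nat) \<Rightarrow> bool" where
  "inf_branch t b \<longleftrightarrow> (\<forall>n. valid t (map b [0..<n]))"

definition is_proof :: "'a ptree \<Rightarrow> bool" where
  "is_proof t \<longleftrightarrow> (\<forall>\<alpha>. valid t \<alpha> \<longrightarrow> step_ok (sub t \<alpha>)) \<and>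
     (\<forall>b. inf_branch t b \<longrightarrow>
        infinite {n. rl (sub t (map b [0..<n])) = BoxR \<and> b n = 1})"

definition Proofs :: "'a ptree set" where "Proofs = {t. is_proof t}"

text \<open>Nodes of the n-fragment: addresses whose proper prefixes have passed fewer than n
  right premises of (Box); the n-th right premises themselves are the cut-off leaves.\<close>
definition in_frag :: "nat \<Rightarrow> 'a ptree \<Rightarrow> nat list \<Rightarrow> bool" where
  "in_frag n t \<alpha> \<longleftrightarrow> valid t \<alpha> \<and> (\<alpha> = [] \<or> rbc t (butlast \<alpha>) < n)"

text \<open>Inner nodes of the n-fragment (whose rule application belongs to the fragment).\<close>
definition inner :: "nat \<Rightarrow> 'a ptree \<Rightarrow> nat list \<Rightarrow> bool" where
  "inner n t \<alpha> \<longleftrightarrow> valid t \<alpha> \<and> rbc t \<alpha> < n"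

definition sim :: "nat \<Rightarrow> 'a ptree \<Rightarrow> 'a ptree \<Rightarrow> bool" where
  "sim n t t' \<longleftrightarrow> n = 0 \<or>
     ((\<forall>\<alpha>. in_frag n t \<alpha> \<longleftrightarrow> in_frag n t' \<alpha>) \<and>
      (\<forall>\<alpha>. in_frag n t \<alpha> \<longrightarrow> seq (sub t \<alpha>) = seq (sub t' \<alpha>)) \<and>
      (\<forall>\<alpha>. inner n t \<alpha> \<longrightarrow> rl (sub t \<alpha>) = rl (sub t' \<alpha>)))"

definition Pn :: "nat \<Rightarrow> 'a ptree set" where
  "Pn n = {t \<in> Proofs. \<forall>\<alpha>. inner n t \<alpha> \<longrightarrow> rl (sub t \<alpha>) \<noteq> Cut}"

definition height :: "'a ptree \<Rightarrow> enat" where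
  "height t = Sup {enat (length \<alpha>) | \<alpha>. in_frag 1 t \<alpha>}"

definition strongly_admissible :: "('a sequent \<times> 'a sequent) set \<Rightarrow> bool" where
  "strongly_admissible R \<longleftrightarrow> (\<exists>u :: 'a ptree \<Rightarrow> 'a ptree.
     (\<forall>\<pi>\<in>Proofs. u \<pi> \<in> Proofs) \<and>
     (\<forall>\<pi>\<in>Proofs. \<forall>\<pi>'\<in>Proofs. \<forall>n. sim n \<pi> \<pi>' \<longrightarrow> sim n (u \<pi>) (u \<pi>')) \<and>
     (\<forall>\<pi>\<in>Proofs. \<forall>n. \<pi> \<in> Pn n \<longrightarrow> u \<pi> \<in> Pn n) \<and>
     (\<forall>\<pi>\<in>Proofs. height (u \<pi>) \<le> height \<pi>) \<and>
     (\<forall>(s, s')\<in>R. \<forall>\<pi>\<in>Proofs. seq \<pi> = s \<longrightarrow> seq (u \<pi>) = s'))"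

definition acl :: "'a \<Rightarrow> ('a sequent \<times> 'a sequent) set" where
  "acl p = {((\<Gamma> + {#At p, At p#}, \<Delta>), (\<Gamma> + {#At p#}, \<Delta>)) | \<Gamma> \<Delta>. True}"

definition acr :: "'a \<Rightarrow> ('a sequent \<times> 'a sequent) set" where
  "acr p = {((\<Gamma>, {#At p, At p#} + \<Delta>), (\<Gamma>, {#At p#} + \<Delta>)) | \<Gamma> \<Delta>. True}"

end

theory Submission imports Defs begin
primcorec cc :: "('a sequent \<Rightarrow> 'a sequent) \<Rightarrow> bool \<Rightarrow> 'a ptree \<Rightarrow> 'a ptree" where
 "cc f b t = Node (if b then f (seq t) else seq t, rl t) (map (\<lambda>i. cc f (b \<and> \<not>(rl t = BoxR \<and> i = 1)) (subs t ! i)) [0..<length (subs t)])"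

lemma cc_rl[simp]: "rl (cc f b t) = rl t" by (simp add: rl_def)
lemma cc_seq[simp]: "seq (cc f b t) = (if b then f (seq t) else seq t)" by (simp add: seq_def)
lemma cc_len[simp]: "length (subs (cc f b t)) = length (subs t)" by simp
lemma cc_nth[simp]: "i < length (subs t) \<Longrightarrow> subs (cc f b t) ! i = cc f (b \<and> \<not>(rl t = BoxR \<and> i = 1)) (subs t ! i)"
  by simp
declare cc.simps(2)[simp del]

lemma cc_valid[simp]: "valid (cc f b t) \<alpha> = valid t \<alpha>"
  by (induction \<alpha> arbitrary: t b) auto

lemma cc_sub: "valid t \<alpha> \<Longrightarrow> sub (cc f b t) \<alpha> = cc f (b \<and> rbc t \<alpha> = 0) (sub t \<alpha>)"
  by (induction \<alpha> arbitrary: t b) auto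

lemma cc_rbc: "valid t \<alpha> \<Longrightarrow> rbc (cc f b t) \<alpha> = rbc t \<alpha>"
  by (induction \<alpha> arbitrary: t b) auto

lemma valid_app: "valid t (xs @ ys) \<Longrightarrow> valid t xs"
  by (induction xs arbitrary: t) auto

lemma valid_butlast: "valid t \<alpha> \<Longrightarrow> valid t (butlast \<alpha>)"
  by (metis append_butlast_last_id butlast.simps(1) valid_app)

lemma rbc_app: "rbc t (xs @ ys) = rbc t xs + rbc (sub t xs) ys"
  by (induction xs arbitrary: t) auto

lemma sub_app: "sub t (xs @ ys) = sub (sub t xs) ys"
  by (induction xs arbitrary: t) auto

lemma cc_in_frag[simp]: "in_frag n (cc f b t) \<alpha> = in_frag n t \<alpha>"
  unfolding in_frag_def by (auto simp: cc_rbc valid_butlast)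

lemma cc_inner[simp]: "inner n (cc f b t) \<alpha> = inner n t \<alpha>"
  unfolding inner_def by (auto simp: cc_rbc)

lemma cc_rl_sub[simp]: "valid t \<alpha> \<Longrightarrow> rl (sub (cc f b t) \<alpha>) = rl (sub t \<alpha>)"
  by (simp add: cc_sub)

lemma cc_height[simp]: "height (cc f b t) = height t"
  unfolding height_def by simp

lemma cc_inf_branch[simp]: "inf_branch (cc f b t) br = inf_branch t br"
  unfolding inf_branch_def by simp

lemma sim_rbc:
  assumes "sim n t t'" "n > 0" "in_frag n t \<alpha>"
  shows "rbc t \<alpha> = rbc t' \<alpha>"
  using assms(3)
proof (induction \<alpha> rule: rev_induct)
  case Nil then show ?case by simp
next
  case (snoc i xs)
  have v: "valid t (xs @ [i])" and lt: "rbc t xs < n" using snoc.prems unfolding in_frag_def by auto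
  have vx: "valid t xs" using v valid_app by blast
  have fx: "in_frag n t xs"
  proof (cases "xs = []")
    case False
    have "rbc t (butlast xs @ [last xs]) = rbc t xs" using False by simp
    then have "rbc t (butlast xs) \<le> rbc t xs" by (metis rbc_app le_add1)
    then show ?thesis unfolding in_frag_def using vx lt by auto
  qed (use vx in \<open>auto simp: in_frag_def\<close>)
  have ih: "rbc t xs = rbc t' xs" using snoc.IH fx by blast
  have "inner n t xs" using vx lt by (simp add: inner_def)
  then have "rl (sub t xs) = rl (sub t' xs)" using assms(1,2) by (simp add: sim_def)
  then show ?case using ih by (simp add: rbc_app)
qed

lemma inner_in_frag: "inner n t \<alpha> \<Longrightarrow> in_frag n t \<alpha>"
proof -
  assume a: "inner n t \<alpha>"
  show ?thesis
  proof (cases "\<alpha> = []")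
    case False
    then have "rbc t (butlast \<alpha> @ [last \<alpha>]) = rbc t \<alpha>" by simp
    then have "rbc t (butlast \<alpha>) \<le> rbc t \<alpha>" by (metis rbc_app le_add1)
    then show ?thesis using a by (auto simp: inner_def in_frag_def)
  qed (use a in \<open>auto simp: inner_def in_frag_def\<close>)
qed

lemma step_cc:
  assumes loc: "\<And>t. step_ok t \<Longrightarrow> P (seq t) \<Longrightarrow> inference (rl t) (map (\<lambda>i. if rl t = BoxR \<and> i = 1 then seq (subs t ! i) else f (seq (subs t ! i))) [0..<length (subs t)]) (f (seq t))"
  and "step_ok s" and "b \<longrightarrow> P (seq s)"
  shows "step_ok (cc f b s)"
proof (cases b)
  case True
  have "map seq (subs (cc f b s)) = map (\<lambda>i. if rl s = BoxR \<and> i = 1 then seq (subs s ! i) else f (seq (subs s ! i))) [0..<length (subs s)]"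
    by (rule nth_equalityI) (auto simp: True)
  then show ?thesis using loc[OF assms(2)] assms(3) True by (simp add: step_ok_def)
next
  case False
  have "map seq (subs (cc f b s)) = map seq (subs s)"
    by (rule nth_equalityI) (auto simp: False)
  then show ?thesis using assms(2) False by (simp add: step_ok_def)
qed

lemma inv_path:
  assumes inv: "\<And>t i. step_ok t \<Longrightarrow> P (seq t) \<Longrightarrow> i < length (subs t) \<Longrightarrow> \<not>(rl t = BoxR \<and> i = 1) \<Longrightarrow> P (seq (subs t ! i))"
  shows "(\<forall>\<alpha>. valid t \<alpha> \<longrightarrow> step_ok (sub t \<alpha>)) \<Longrightarrow> P (seq t) \<Longrightarrow> valid t \<alpha> \<Longrightarrow> rbc t \<alpha> = 0 \<Longrightarrow> P (seq (sub t \<alpha>))"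
proof (induction \<alpha> arbitrary: t)
  case Nil then show ?case by simp
next
  case (Cons i js)
  have so: "step_ok t" using Cons.prems(1) by (metis sub.simps(1) valid.simps(1))
  have c: "\<not>(rl t = BoxR \<and> i = 1)" "rbc (subs t ! i) js = 0" using Cons.prems(4) by (auto split: if_splits)
  have "P (seq (subs t ! i))" using inv[OF so Cons.prems(2)] Cons.prems(3) c by auto
  moreover have "\<forall>\<alpha>. valid (subs t ! i) \<alpha> \<longrightarrow> step_ok (sub (subs t ! i) \<alpha>)"
    using Cons.prems(1,3) by (metis sub.simps(2) valid.simps(2))
  ultimately show ?case using Cons.IH Cons.prems(3) c by simp
qed

lemma generic:
  assumes inv: "\<And>t i. step_ok t \<Longrightarrow> P (seq t) \<Longrightarrow> i < length (subs t) \<Longrightarrow> \<not>(rl t = BoxR \<and> i = 1) \<Longrightarrow> P (seq (subs t ! i))"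
  and loc: "\<And>t. step_ok t \<Longrightarrow> P (seq t) \<Longrightarrow> inference (rl t) (map (\<lambda>i. if rl t = BoxR \<and> i = 1 then seq (subs t ! i) else f (seq (subs t ! i))) [0..<length (subs t)]) (f (seq t))"
  and R: "\<And>s s'. (s, s') \<in> R \<Longrightarrow> P s \<and> s' = f s"
  shows "strongly_admissible R"
proof -
  define u where "u = (\<lambda>\<pi>. cc f (P (seq \<pi>)) \<pi>)"
  have pr: "u \<pi> \<in> Proofs" if "\<pi> \<in> Proofs" for \<pi>
  proof -
    have st: "\<forall>\<alpha>. valid \<pi> \<alpha> \<longrightarrow> step_ok (sub \<pi> \<alpha>)" and ib: "\<forall>b. inf_branch \<pi> b \<longrightarrow>
        infinite {n. rl (sub \<pi> (map b [0..<n])) = BoxR \<and> b n = 1}"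
      using that by (auto simp: Proofs_def is_proof_def)
    have "step_ok (sub (u \<pi>) \<alpha>)" if "valid (u \<pi>) \<alpha>" for \<alpha>
    proof -
      have v: "valid \<pi> \<alpha>" using that by (simp add: u_def)
      show ?thesis unfolding u_def cc_sub[OF v]
        by (rule step_cc[OF loc]) (use st v inv_path[where P=P, OF inv st] in auto)
    qed
    moreover have "infinite {n. rl (sub (u \<pi>) (map b [0..<n])) = BoxR \<and> b n = 1}" if "inf_branch (u \<pi>) b" for b
    proof -
      have i: "inf_branch \<pi> b" using that by (simp add: u_def)
      then have "{n. rl (sub (u \<pi>) (map b [0..<n])) = BoxR \<and> b n = 1} = {n. rl (sub \<pi> (map b [0..<n])) = BoxR \<and> b n = 1}"
        by (auto simp: u_def inf_branch_def)
      then show ?thesis using ib i by simp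
    qed
    ultimately show ?thesis by (simp add: Proofs_def is_proof_def)
  qed
  have sm: "sim n (u \<pi>) (u \<pi>')" if "sim n \<pi> \<pi>'" for \<pi> \<pi>' n
  proof (cases "n = 0")
    case True then show ?thesis by (simp add: sim_def)
  next
    case False
    have s: "(\<forall>\<alpha>. in_frag n \<pi> \<alpha> \<longleftrightarrow> in_frag n \<pi>' \<alpha>)" "(\<forall>\<alpha>. in_frag n \<pi> \<alpha> \<longrightarrow> seq (sub \<pi> \<alpha>) = seq (sub \<pi>' \<alpha>))"
      "(\<forall>\<alpha>. inner n \<pi> \<alpha> \<longrightarrow> rl (sub \<pi> \<alpha>) = rl (sub \<pi>' \<alpha>))" using that False by (auto simp: sim_def)
    have r: "seq \<pi> = seq \<pi>'" using s(2)[rule_format, of "[]"] by (simp add: in_frag_def)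
    have "seq (sub (u \<pi>) \<alpha>) = seq (sub (u \<pi>') \<alpha>)" if "in_frag n \<pi> \<alpha>" for \<alpha>
    proof -
      have v: "valid \<pi> \<alpha>" "valid \<pi>' \<alpha>" using that s(1) by (auto simp: in_frag_def)
      have "rbc \<pi> \<alpha> = rbc \<pi>' \<alpha>" using sim_rbc[OF \<open>sim n \<pi> \<pi>'\<close>] False that by auto
      then show ?thesis using s(2) that r by (simp add: u_def cc_sub[OF v(1)] cc_sub[OF v(2)])
    qed
    moreover have "rl (sub (u \<pi>) \<alpha>) = rl (sub (u \<pi>') \<alpha>)" if "inner n \<pi> \<alpha>" for \<alpha>
    proof -
      have v: "valid \<pi> \<alpha>" "valid \<pi>' \<alpha>" using inner_in_frag[OF that] s(1) by (auto simp: in_frag_def)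
      show ?thesis using s(3) that by (simp add: u_def v)
    qed
    ultimately show ?thesis using s False by (simp add: sim_def u_def)
  qed
  have pn: "u \<pi> \<in> Pn n" if "\<pi> \<in> Pn n" for \<pi> n
  proof -
    have "\<pi> \<in> Proofs" using that by (simp add: Pn_def)
    then show ?thesis using that pr by (auto simp: Pn_def u_def inner_def cc_rbc)
  qed
  have "height (u \<pi>) \<le> height \<pi>" for \<pi> by (simp add: u_def)
  moreover have "seq (u \<pi>) = s'" if "(s, s') \<in> R" "seq \<pi> = s" for s s' \<pi>
    using R[OF that(1)] that(2) by (simp add: u_def)
  ultimately show ?thesis unfolding strongly_admissible_def using pr sm pn by blast
qed



lemma c2mem: "2 \<le> count G x \<Longrightarrow> x \<in># G" by (rule iffD1[OF count_greater_zero_iff]) linarith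
lemma upt2: "[0..<2] = [0, 1::nat]" by (simp add: upt_rec)

lemma E_ImpL: assumes "inference ImpL ps s" obtains G D A B where "ps = [(G + {#B#}, D), (G, {#A#} + D)]" "s = (G + {#Imp A B#}, D)"
  using assms that unfolding inference.simps by blast
lemma E_ImpR: assumes "inference ImpR ps s" obtains G D A B where "ps = [(G + {#A#}, {#B#} + D)]" "s = (G, {#Imp A B#} + D)"
  using assms that unfolding inference.simps by blast
lemma E_Refl: assumes "inference Refl ps s" obtains G D B where "ps = [(G + {#B, Box B#}, D)]" "s = (G + {#Box B#}, D)"
  using assms that unfolding inference.simps by blast
lemma E_BoxR: assumes "inference BoxR ps s" obtains G D Pi A where "ps = [(G + image_mset Box Pi, {#A#} + D), (image_mset Box Pi, {#A#})]"
     "s = (G + image_mset Box Pi, {#Box A#} + D)"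
  using assms that unfolding inference.simps by blast
lemma E_Cut: assumes "inference Cut ps s" obtains G D A where "ps = [(G, {#A#} + D), (G + {#A#}, D)]" "s = (G, D)"
  using assms that unfolding inference.simps by blast
lemma E_Ax: assumes "inference Ax ps s" shows "ps = [] \<and> ((\<exists>q. At q \<in># fst s \<and> At q \<in># snd s) \<or> Bot \<in># fst s)"
  using assms by (simp only: inference.simps)

lemma I_ImpL: "ps = [(G + {#B#}, D), (G, {#A#} + D)] \<Longrightarrow> s = (G + {#Imp A B#}, D) \<Longrightarrow> inference ImpL ps s"
  unfolding inference.simps by blast
lemma I_ImpR: "ps = [(G + {#A#}, {#B#} + D)] \<Longrightarrow> s = (G, {#Imp A B#} + D) \<Longrightarrow> inference ImpR ps s"
  unfolding inference.simps by blast
lemma I_Refl: "ps = [(G + {#B, Box B#}, D)] \<Longrightarrow> s = (G + {#Box B#}, D) \<Longrightarrow> inference Refl ps s"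
  unfolding inference.simps by blast
lemma I_BoxR: "ps = [(G + image_mset Box Pi, {#A#} + D), (image_mset Box Pi, {#A#})] \<Longrightarrow>
     s = (G + image_mset Box Pi, {#Box A#} + D) \<Longrightarrow> inference BoxR ps s"
  unfolding inference.simps by blast
lemma I_Cut: "ps = [(G, {#A#} + D), (G + {#A#}, D)] \<Longrightarrow> s = (G, D) \<Longrightarrow> inference Cut ps s"
  unfolding inference.simps by blast
lemma I_Ax: "ps = [] \<Longrightarrow> (\<exists>q. At q \<in># fst s \<and> At q \<in># snd s) \<or> Bot \<in># fst s \<Longrightarrow> inference Ax ps s"
  by (simp only: inference.simps)


lemma invL:
  assumes "inference r ps s" "2 \<le> count (fst s) (At p)" "i < length ps" "\<not>(r = BoxR \<and> i = 1)"
  shows "2 \<le> count (fst (ps ! i)) (At p)"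
proof (cases r)
  case Ax then show ?thesis using E_Ax[OF assms(1)[unfolded Ax]] assms(3) by simp
next
  case ImpL
  from assms(1)[unfolded ImpL] obtain G D A B where e: "ps = [(G + {#B#}, D), (G, {#A#} + D)]" "s = (G + {#Imp A B#}, D)" by (rule E_ImpL)
  have "i = 0 \<or> i = 1" using assms(3) e by auto
  then show ?thesis using assms(2) e by (cases "i = 0") (simp_all add: c2mem)
next
  case ImpR
  from assms(1)[unfolded ImpR] obtain G D A B where e: "ps = [(G + {#A#}, {#B#} + D)]" "s = (G, {#Imp A B#} + D)" by (rule E_ImpR)
  have "i = 0" using assms(3) e by auto
  then show ?thesis using assms(2) e by (simp add: c2mem)
next
  case Refl
  from assms(1)[unfolded Refl] obtain G D B where e: "ps = [(G + {#B, Box B#}, D)]" "s = (G + {#Box B#}, D)" by (rule E_Refl)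
  have "i = 0" using assms(3) e by auto
  then show ?thesis using assms(2) e by (simp add: c2mem)
next
  case BoxR
  from assms(1)[unfolded BoxR] obtain G D Pi A where e: "ps = [(G + image_mset Box Pi, {#A#} + D), (image_mset Box Pi, {#A#})]"
     "s = (G + image_mset Box Pi, {#Box A#} + D)" by (rule E_BoxR)
  have "i = 0" using assms(3,4) e BoxR by auto
  then show ?thesis using assms(2) e by (simp add: c2mem)
next
  case Cut
  from assms(1)[unfolded Cut] obtain G D A where e: "ps = [(G, {#A#} + D), (G + {#A#}, D)]" "s = (G, D)" by (rule E_Cut)
  have "i = 0 \<or> i = 1" using assms(3) e by auto
  then show ?thesis using assms(2) e by (cases "i = 0") (simp_all add: c2mem)
qed

lemma invR:
  assumes "inference r ps s" "2 \<le> count (snd s) (At p)" "i < length ps" "\<not>(r = BoxR \<and> i = 1)"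
  shows "2 \<le> count (snd (ps ! i)) (At p)"
proof (cases r)
  case Ax then show ?thesis using E_Ax[OF assms(1)[unfolded Ax]] assms(3) by simp
next
  case ImpL
  from assms(1)[unfolded ImpL] obtain G D A B where e: "ps = [(G + {#B#}, D), (G, {#A#} + D)]" "s = (G + {#Imp A B#}, D)" by (rule E_ImpL)
  have "i = 0 \<or> i = 1" using assms(3) e by auto
  then show ?thesis using assms(2) e by (cases "i = 0") (simp_all add: c2mem)
next
  case ImpR
  from assms(1)[unfolded ImpR] obtain G D A B where e: "ps = [(G + {#A#}, {#B#} + D)]" "s = (G, {#Imp A B#} + D)" by (rule E_ImpR)
  have "i = 0" using assms(3) e by auto
  then show ?thesis using assms(2) e by (simp add: c2mem)
next
  case Refl
  from assms(1)[unfolded Refl] obtain G D B where e: "ps = [(G + {#B, Box B#}, D)]" "s = (G + {#Box B#}, D)" by (rule E_Refl)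
  have "i = 0" using assms(3) e by auto
  then show ?thesis using assms(2) e by (simp add: c2mem)
next
  case BoxR
  from assms(1)[unfolded BoxR] obtain G D Pi A where e: "ps = [(G + image_mset Box Pi, {#A#} + D), (image_mset Box Pi, {#A#})]"
     "s = (G + image_mset Box Pi, {#Box A#} + D)" by (rule E_BoxR)
  have "i = 0" using assms(3,4) e BoxR by auto
  then show ?thesis using assms(2) e by (simp add: c2mem)
next
  case Cut
  from assms(1)[unfolded Cut] obtain G D A where e: "ps = [(G, {#A#} + D), (G + {#A#}, D)]" "s = (G, D)" by (rule E_Cut)
  have "i = 0 \<or> i = 1" using assms(3) e by auto
  then show ?thesis using assms(2) e by (cases "i = 0") (simp_all add: c2mem)
qed

lemma msw: assumes "x \<in># G" shows "G + M - {#x#} = (G - {#x#}) + M"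
proof -
  have "M + G - {#x#} = M + (G - {#x#})" by (rule multiset_diff_union_assoc) (simp add: assms)
  then show ?thesis by (simp only: add.commute)
qed

lemma locL:
  assumes "inference r ps s" "2 \<le> count (fst s) (At p)"
  shows "inference r (map (\<lambda>i. if r = BoxR \<and> i = 1 then ps ! i else (fst (ps!i) - {#At p#}, snd (ps!i))) [0..<length ps]) (fst s - {#At p#}, snd s)"
proof (cases r)
  case Ax
  have a: "ps = []" "(\<exists>q. At q \<in># fst s \<and> At q \<in># snd s) \<or> Bot \<in># fst s" using E_Ax[OF assms(1)[unfolded Ax]] by auto
  have "(\<exists>q. At q \<in># fst (fst s - {#At p#}, snd s) \<and> At q \<in># snd (fst s - {#At p#}, snd s)) \<or> Bot \<in># fst (fst s - {#At p#}, snd s)"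
  proof (cases "Bot \<in># fst s")
    case True then show ?thesis by (simp add: in_diff_count)
  next
    case False
    then obtain q where q: "At q \<in># fst s" "At q \<in># snd s" using a(2) by blast
    show ?thesis
    proof (cases "q = p")
      case True
      have "At p \<in># fst s - {#At p#}" using assms(2) by (simp add: in_diff_count)
      then show ?thesis using q True by auto
    next
      case False then show ?thesis using q by (auto simp: in_diff_count)
    qed
  qed
  then show ?thesis unfolding Ax using a(1) by (intro I_Ax) simp_all
next
  case ImpL
  from assms(1)[unfolded ImpL] obtain G D A B where e: "ps = [(G + {#B#}, D), (G, {#A#} + D)]" "s = (G + {#Imp A B#}, D)" by (rule E_ImpL)
  have m: "At p \<in># G" using assms(2) e by (simp add: c2mem)
  show ?thesis unfolding ImpL by (rule I_ImpL[where G = "G - {#At p#}"]) (use e m in \<open>simp_all add: upt2\<close>)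
next
  case ImpR
  from assms(1)[unfolded ImpR] obtain G D A B where e: "ps = [(G + {#A#}, {#B#} + D)]" "s = (G, {#Imp A B#} + D)" by (rule E_ImpR)
  have m: "At p \<in># G" using assms(2) e by (simp add: c2mem)
  show ?thesis unfolding ImpR by (rule I_ImpR[where G = "G - {#At p#}"]) (use e m in \<open>simp_all\<close>)
next
  case Refl
  from assms(1)[unfolded Refl] obtain G D B where e: "ps = [(G + {#B, Box B#}, D)]" "s = (G + {#Box B#}, D)" by (rule E_Refl)
  have m: "At p \<in># G" using assms(2) e by (simp add: c2mem)
  show ?thesis unfolding Refl by (rule I_Refl[where G = "G - {#At p#}"]) (use e m in \<open>simp_all\<close>)
next
  case BoxR
  from assms(1)[unfolded BoxR] obtain G D Pi A where e: "ps = [(G + image_mset Box Pi, {#A#} + D), (image_mset Box Pi, {#A#})]"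
     "s = (G + image_mset Box Pi, {#Box A#} + D)" by (rule E_BoxR)
  have "count (image_mset Box Pi) (At p) = 0" by (auto simp: count_eq_zero_iff)
  then have m: "At p \<in># G" using assms(2) e by (simp add: c2mem)
  have mm: "G + image_mset Box Pi - {#At p#} = (G - {#At p#}) + image_mset Box Pi" if "At p \<in># G" using msw[OF that] .
  show ?thesis unfolding BoxR by (rule I_BoxR[where G = "G - {#At p#}"]) (use e m mm in \<open>simp_all add: upt2\<close>)
next
  case Cut
  from assms(1)[unfolded Cut] obtain G D A where e: "ps = [(G, {#A#} + D), (G + {#A#}, D)]" "s = (G, D)" by (rule E_Cut)
  have m: "At p \<in># G" using assms(2) e by (simp add: c2mem)
  show ?thesis unfolding Cut by (rule I_Cut[where G = "G - {#At p#}"]) (use e m in \<open>simp_all add: upt2\<close>)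
qed

lemma locR:
  assumes "inference r ps s" "2 \<le> count (snd s) (At p)"
  shows "inference r (map (\<lambda>i. if r = BoxR \<and> i = 1 then ps ! i else (fst (ps!i), snd (ps!i) - {#At p#})) [0..<length ps]) (fst s, snd s - {#At p#})"
proof (cases r)
  case Ax
  have a: "ps = []" "(\<exists>q. At q \<in># fst s \<and> At q \<in># snd s) \<or> Bot \<in># fst s" using E_Ax[OF assms(1)[unfolded Ax]] by auto
  have "(\<exists>q. At q \<in># fst (fst s, snd s - {#At p#}) \<and> At q \<in># snd (fst s, snd s - {#At p#})) \<or> Bot \<in># fst (fst s, snd s - {#At p#})"
  proof (cases "Bot \<in># fst s")
    case True then show ?thesis by (simp add: in_diff_count)
  next
    case False
    then obtain q where q: "At q \<in># fst s" "At q \<in># snd s" using a(2) by blast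
    show ?thesis
    proof (cases "q = p")
      case True
      have "At p \<in># snd s - {#At p#}" using assms(2) by (simp add: in_diff_count)
      then show ?thesis using q True by auto
    next
      case False then show ?thesis using q by (auto simp: in_diff_count)
    qed
  qed
  then show ?thesis unfolding Ax using a(1) by (intro I_Ax) simp_all
next
  case ImpL
  from assms(1)[unfolded ImpL] obtain G D A B where e: "ps = [(G + {#B#}, D), (G, {#A#} + D)]" "s = (G + {#Imp A B#}, D)" by (rule E_ImpL)
  have m: "At p \<in># D" using assms(2) e by (simp add: c2mem)
  show ?thesis unfolding ImpL by (rule I_ImpL[where D = "D - {#At p#}"]) (use e m in \<open>simp_all add: upt2\<close>)
next
  case ImpR
  from assms(1)[unfolded ImpR] obtain G D A B where e: "ps = [(G + {#A#}, {#B#} + D)]" "s = (G, {#Imp A B#} + D)" by (rule E_ImpR)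
  have m: "At p \<in># D" using assms(2) e by (simp add: c2mem)
  show ?thesis unfolding ImpR by (rule I_ImpR[where D = "D - {#At p#}"]) (use e m in \<open>simp_all\<close>)
next
  case Refl
  from assms(1)[unfolded Refl] obtain G D B where e: "ps = [(G + {#B, Box B#}, D)]" "s = (G + {#Box B#}, D)" by (rule E_Refl)
  have m: "At p \<in># D" using assms(2) e by (simp add: c2mem)
  show ?thesis unfolding Refl by (rule I_Refl[where D = "D - {#At p#}"]) (use e m in \<open>simp_all\<close>)
next
  case BoxR
  from assms(1)[unfolded BoxR] obtain G D Pi A where e: "ps = [(G + image_mset Box Pi, {#A#} + D), (image_mset Box Pi, {#A#})]"
     "s = (G + image_mset Box Pi, {#Box A#} + D)" by (rule E_BoxR)
  have "count (image_mset Box Pi) (At p) = 0" by (auto simp: count_eq_zero_iff)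
  then have m: "At p \<in># D" using assms(2) e by (simp add: c2mem)
  have mm: "G + image_mset Box Pi - {#At p#} = (G - {#At p#}) + image_mset Box Pi" if "At p \<in># G" using msw[OF that] .
  show ?thesis unfolding BoxR by (rule I_BoxR[where D = "D - {#At p#}"]) (use e m mm in \<open>simp_all add: upt2\<close>)
next
  case Cut
  from assms(1)[unfolded Cut] obtain G D A where e: "ps = [(G, {#A#} + D), (G + {#A#}, D)]" "s = (G, D)" by (rule E_Cut)
  have m: "At p \<in># D" using assms(2) e by (simp add: c2mem)
  show ?thesis unfolding Cut by (rule I_Cut[where D = "D - {#At p#}"]) (use e m in \<open>simp_all add: upt2\<close>)
qed
lemma bridge: "map (\<lambda>i. if r \<and> i = 1 then seq (subs t ! i) else f (seq (subs t ! i))) [0..<length (subs t)]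
  = map (\<lambda>i. if r \<and> i = 1 then (map seq (subs t)) ! i else f ((map seq (subs t)) ! i)) [0..<length (map seq (subs t))]"
  by (rule map_cong) auto

theorem lemma5p3:
  fixes p :: 'a
  shows "strongly_admissible (acl p) \<and> strongly_admissible (acr p)"
proof
  show "strongly_admissible (acl p)"
  proof (rule generic[where P = "\<lambda>s. 2 \<le> count (fst s) (At p)" and f = "\<lambda>s. (fst s - {#At p#}, snd s)"])
    fix t i assume "step_ok t" "2 \<le> count (fst (seq t)) (At p)" "i < length (subs t)" "\<not> (rl t = BoxR \<and> i = 1)"
    then show "2 \<le> count (fst (seq (subs t ! i))) (At p)"
      using invL[of "rl t" "map seq (subs t)" "seq t" p i] by (simp add: step_ok_def)
  next
    fix t assume "step_ok t" "2 \<le> count (fst (seq t)) (At p)"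
    then show "inference (rl t) (map (\<lambda>i. if rl t = BoxR \<and> i = 1 then seq (subs t ! i) else (fst (seq (subs t ! i)) - {#At p#}, snd (seq (subs t ! i)))) [0..<length (subs t)]) (fst (seq t) - {#At p#}, snd (seq t))"
      using locL[of "rl t" "map seq (subs t)" "seq t" p] unfolding bridge[where f = "\<lambda>s. (fst s - {#At p#}, snd s)"]
      by (simp add: step_ok_def)
  next
    fix s s' assume "(s, s') \<in> acl p"
    then show "2 \<le> count (fst s) (At p) \<and> s' = (fst s - {#At p#}, snd s)" by (auto simp: acl_def)
  qed
  show "strongly_admissible (acr p)"
  proof (rule generic[where P = "\<lambda>s. 2 \<le> count (snd s) (At p)" and f = "\<lambda>s. (fst s, snd s - {#At p#})"])
    fix t i assume "step_ok t" "2 \<le> count (snd (seq t)) (At p)" "i < length (subs t)" "\<not> (rl t = BoxR \<and> i = 1)"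
    then show "2 \<le> count (snd (seq (subs t ! i))) (At p)"
      using invR[of "rl t" "map seq (subs t)" "seq t" p i] by (simp add: step_ok_def)
  next
    fix t assume "step_ok t" "2 \<le> count (snd (seq t)) (At p)"
    then show "inference (rl t) (map (\<lambda>i. if rl t = BoxR \<and> i = 1 then seq (subs t ! i) else (fst (seq (subs t ! i)), snd (seq (subs t ! i)) - {#At p#})) [0..<length (subs t)]) (fst (seq t), snd (seq t) - {#At p#})"
      using locR[of "rl t" "map seq (subs t)" "seq t" p] unfolding bridge[where f = "\<lambda>s. (fst s, snd s - {#At p#})"]
      by (simp add: step_ok_def)
  next
    fix s s' assume "(s, s') \<in> acr p"
    then show "2 \<le> count (snd s) (At p) \<and> s' = (fst s, snd s - {#At p#})" by (auto simp: acr_def)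
  qed
qed
end
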